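(* Consider the linear time-invariant multiple-input multiple-output (LTI MIMO) state-space model $$\alpha_{k+1}=T\alpha_k+Bx_k+\eta_k,\qquad y_k=Z\alpha_k+\beta x_k+\varepsilon_k,\qquad \begin{bmatrix}\eta_k\\ \varepsilon_k\end{bmatrix}\sim\mathcal N\!\left(\begin{bmatrix}0\\0\end{bmatrix},\begin{bmatrix}Q&S\\ S^\top&H\end{bmatrix}\right),$$ with $\alpha_k\in\mathbb R^n$, $y_k\in\mathbb R^m$, $x_k\in\mathbb R^d$, $H>0$, initial state $\alpha_0\sim\mathcal N(\bar\alpha_0,\Pi_0)$ with $\Pi_0>0$, and $\overline Q:=Q-SH^{-1}S^\top\ge 0$. Let $\overline T:=T-SH^{-1}Z$, $\overline B:=B-SH^{-1}\beta$. (Conventional filter, Algorithm 1.) Set $\hat\alpha_{0|0}=\bar\alpha_0$, $P_{0|0}=\Pi_0$, and for $k=1,\dots,N$: $\hat\alpha_{k|k-1}=\overline T\hat\alpha_{k-1|k-1}+\overline Bx_{k-1}+SH^{-1}y_{k-1}$; $P_{k|k-1}=\overline TP_{k-1|k-1}\overline T^\top+\overline Q$; $R_{e,k}=ZP_{k|k-1}Z^\top+H$; $K_k=P_{k|k-1}Z^\top R_{e,k}^{-1}$; $e_k=y_k-Z\hat\alpha_{k|k-1}-\beta x_k$; $\hat\alpha_{k|k}=\hat\alpha_{k|k-1}+K_ke_k$; $P_{k|k}=(I-K_kZ)P_{k|k-1}$. (UD-based filter, Algorithm 1a.) Take $UDU^\top$ factorizations $\Pi_0=\bar U_{\Pi_0}D_{\Pi_0}\bar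 U_{\Pi_0}^\top$, $H=\bar U_HD_H\bar U_H^\top$, $\overline Q=\bar U_{\overline Q}D_{\overline Q}\bar U_{\overline Q}^\top$; set $\hat\alpha_{0|0}=\bar\alpha_0$, $\bar U_{P_{0|0}}=\bar U_{\Pi_0}$, $D_{P_{0|0}}=D_{\Pi_0}$; and for $k=1,\dots,N$: (i) $\hat\alpha_{k|k-1}=\overline T\hat\alpha_{k-1|k-1}+\overline Bx_{k-1}+SH^{-1}y_{k-1}$; (ii) apply MWGS to the pre-arrays $\mathbb A^\top=[\,\overline T\bar U_{P_{k-1|k-1}}\ \ \bar U_{\overline Q}\,]$, $\mathbb D_A=D_{P_{k-1|k-1}}\oplus D_{\overline Q}$ and set $\bar U_{P_{k|k-1}}:=\mathbb R$, $D_{P_{k|k-1}}:=\mathbb D_R$; (iii) apply MWGS to the pre-arrays $\mathbb A^\top=\begin{bmatrix}\bar U_{P_{k|k-1}}&0\\ Z\bar U_{P_{k|k-1}}&\bar U_H\end{bmatrix}$, $\mathbb D_A=D_{P_{k|k-1}}\oplus D_H$, and read off from the post-arrays $\mathbb R=\begin{bmatrix}\bar U_{P_{k|k}}&\bar K_k^u\\0&\bar U_{R_{e,k}}\end{bmatrix}$, $\mathbb D_R=D_{P_{k|k}}\oplus D_{R_{e,k}}$ (blocks partitioned conformally with sizes $n$ and $m$); (iv) $e_k=y_k-Z\hat\alpha_{k|k-1}-\beta x_k$; (v) $\hat\alpha_{k|k}=\hat\alpha_{k|k-1}+\bar K_k^u\bar U_{R_{e,k}}^{-1}e_k$. Then Algorithm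 1a is algebraically equivalent to Algorithm 1: for every $k$, the quantities computed by Algorithm 1a satisfy $\bar U_{P_{k|k-1}}D_{P_{k|k-1}}\bar U_{P_{k|k-1}}^\top=P_{k|k-1}$, $\bar U_{R_{e,k}}D_{R_{e,k}}\bar U_{R_{e,k}}^\top=R_{e,k}$, $\bar K_k^u\bar U_{R_{e,k}}^{-1}=K_k$, $\bar U_{P_{k|k}}D_{P_{k|k}}\bar U_{P_{k|k}}^\top=P_{k|k}$, and the state estimates $\hat\alpha_{k|k-1}$, $\hat\alpha_{k|k}$ coincide with those of Algorithm 1.
   Context: A $UDU^\top$ (modified Cholesky) factorization of a symmetric positive (semi)definite matrix $P$ is $P=\bar U_PD_P\bar U_P^\top$ with $\bar U_P$ upper triangular with unit diagonal and $D_P$ diagonal. For square matrices $A,B$, $A\oplus B:=\mathrm{diag}\{A,B\}$. The modified weighted Gram–Schmidt (MWGS) step: given pre-arrays $\mathbb A\in\mathbb R^{r\times s}$ ($r\ge s$) and a diagonal $\mathbb D_A\in\mathbb R^{r\times r}$, $\mathbb D_A>0$, it returns post-arrays $\mathbb R\in\mathbb R^{s\times s}$ upper triangular with unit diagonal and $\mathbb D_R\in\mathbb R^{s\times s}$ diagonal such that $\mathbb A^\top=\mathbb R\,\mathfrak W^\top$ and $\mathfrak W^\top\mathbb D_A\mathfrak W=\mathbb D_R$ for some matrix $\mathfrak W\in\mathbb R^{r\times s}$. The algorithms are considered under the assumption that every MWGS call is well defined. *)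

theory Defs
  imports "Jordan_Normal_Form.Matrix"
begin

definition minv :: "real mat \<Rightarrow> real mat" where
  "minv A = (SOME B. B \<in> carrier_mat (dim_row A) (dim_row A) \<and>
                     A * B = 1\<^sub>m (dim_row A) \<and> B * A = 1\<^sub>m (dim_row A))"

definition sym_mat :: "real mat \<Rightarrow> bool" where
  "sym_mat A \<longleftrightarrow> A\<^sup>T = A"

definition psd :: "nat \<Rightarrow> real mat \<Rightarrow> bool" where
  "psd n A \<longleftrightarrow> A \<in> carrier_mat n n \<and> sym_mat A \<and>
     (\<forall>v \<in> carrier_vec n. v \<bullet> (A *\<^sub>v v) \<ge> 0)"

definition pd :: "nat \<Rightarrow> real mat \<Rightarrow> bool" where
  "pd n A \<longleftrightarrow> A \<in> carrier_mat n n \<and> sym_mat A \<and>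
     (\<forall>v \<in> carrier_vec n. v \<noteq> 0\<^sub>v n \<longrightarrow> v \<bullet> (A *\<^sub>v v) > 0)"

definition unit_upper :: "nat \<Rightarrow> real mat \<Rightarrow> bool" where
  "unit_upper n U \<longleftrightarrow> U \<in> carrier_mat n n \<and> upper_triangular U \<and>
     (\<forall>i<n. U $$ (i,i) = 1)"

definition diag_mat :: "nat \<Rightarrow> real mat \<Rightarrow> bool" where
  "diag_mat n D \<longleftrightarrow> D \<in> carrier_mat n n \<and> diagonal_mat D"

definition pos_diag_mat :: "nat \<Rightarrow> real mat \<Rightarrow> bool" where
  "pos_diag_mat n D \<longleftrightarrow> diag_mat n D \<and> (\<forall>i<n. D $$ (i,i) > 0)"

definition is_UDU :: "nat \<Rightarrow> real mat \<Rightarrow> real mat \<Rightarrow> real mat \<Rightarrow> bool" where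
  "is_UDU n P U D \<longleftrightarrow> unit_upper n U \<and> diag_mat n D \<and> P = U * D * U\<^sup>T"

definition dsum :: "real mat \<Rightarrow> real mat \<Rightarrow> real mat" (infixl "\<oplus>\<^sub>m" 65) where
  "A \<oplus>\<^sub>m B = four_block_mat A (0\<^sub>m (dim_row A) (dim_col B)) (0\<^sub>m (dim_row B) (dim_col A)) B"

definition MWGS :: "nat \<Rightarrow> nat \<Rightarrow> real mat \<Rightarrow> real mat \<Rightarrow> real mat \<Rightarrow> real mat \<Rightarrow> bool" where
  "MWGS r s A DA R DR \<longleftrightarrow>
     s \<le> r \<and> A \<in> carrier_mat r s \<and> pos_diag_mat r DA \<and>
     unit_upper s R \<and> diag_mat s DR \<and>
     (\<exists>W \<in> carrier_mat r s. A\<^sup>T = R * W\<^sup>T \<and> W\<^sup>T * DA * W = DR)"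

definition model_ok ::
  "nat \<Rightarrow> nat \<Rightarrow> nat \<Rightarrow> real mat \<Rightarrow> real mat \<Rightarrow> real mat \<Rightarrow> real mat \<Rightarrow> real mat \<Rightarrow> real mat
   \<Rightarrow> real mat \<Rightarrow> real vec \<Rightarrow> real mat \<Rightarrow> bool" where
  "model_ok n m d T B Z \<beta> Q S H a0 Pi0 \<longleftrightarrow>
     T \<in> carrier_mat n n \<and> B \<in> carrier_mat n d \<and> Z \<in> carrier_mat m n \<and>
     \<beta> \<in> carrier_mat m d \<and> Q \<in> carrier_mat n n \<and> S \<in> carrier_mat n m \<and> a0 \<in> carrier_vec n \<and>
     psd (n + m) (four_block_mat Q S S\<^sup>T H) \<and>
     pd m H \<and> pd n Pi0 \<and> psd n (Q - S * minv H * S\<^sup>T)"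

(* Algorithm 1 (conventional filter); indices k = 1..N.
   ap k = \<alpha>_{k|k-1}, af k = \<alpha>_{k|k}, Pp k = P_{k|k-1}, Pf k = P_{k|k}. *)
definition alg1 ::
  "nat \<Rightarrow> nat \<Rightarrow> real mat \<Rightarrow> real mat \<Rightarrow> real mat \<Rightarrow> real mat \<Rightarrow> real mat \<Rightarrow> real mat
   \<Rightarrow> real mat \<Rightarrow> real vec \<Rightarrow> real mat \<Rightarrow> (nat \<Rightarrow> real vec) \<Rightarrow> (nat \<Rightarrow> real vec)
   \<Rightarrow> (nat \<Rightarrow> real vec) \<Rightarrow> (nat \<Rightarrow> real vec) \<Rightarrow> (nat \<Rightarrow> real mat) \<Rightarrow> (nat \<Rightarrow> real mat)
   \<Rightarrow> (nat \<Rightarrow> real mat) \<Rightarrow> (nat \<Rightarrow> real mat) \<Rightarrow> (nat \<Rightarrow> real vec) \<Rightarrow> bool" where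
  "alg1 N n T B Z \<beta> Q S H a0 Pi0 x y ap af Pp Pf Rek K e \<longleftrightarrow>
     (let Tb = T - S * minv H * Z; Bb = B - S * minv H * \<beta>;
          Qb = Q - S * minv H * S\<^sup>T in
     af 0 = a0 \<and> Pf 0 = Pi0 \<and>
     (\<forall>k. 1 \<le> k \<and> k \<le> N \<longrightarrow>
        ap k = Tb *\<^sub>v af (k-1) + Bb *\<^sub>v x (k-1) + (S * minv H) *\<^sub>v y (k-1) \<and>
        Pp k = Tb * Pf (k-1) * Tb\<^sup>T + Qb \<and>
        Rek k = Z * Pp k * Z\<^sup>T + H \<and>
        K k = Pp k * Z\<^sup>T * minv (Rek k) \<and>
        e k = y k - Z *\<^sub>v ap k - \<beta> *\<^sub>v x k \<and>
        af k = ap k + K k *\<^sub>v e k \<and>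
        Pf k = (1\<^sub>m n - K k * Z) * Pp k))"

(* Algorithm 1a (UD-based filter); the MWGS post-arrays are any valid MWGS outputs. *)
definition alg1a ::
  "nat \<Rightarrow> nat \<Rightarrow> nat \<Rightarrow> real mat \<Rightarrow> real mat \<Rightarrow> real mat \<Rightarrow> real mat \<Rightarrow> real mat \<Rightarrow> real mat
   \<Rightarrow> real mat \<Rightarrow> real vec \<Rightarrow> real mat \<Rightarrow> (nat \<Rightarrow> real vec) \<Rightarrow> (nat \<Rightarrow> real vec)
   \<Rightarrow> real mat \<Rightarrow> real mat \<Rightarrow> real mat \<Rightarrow> real mat \<Rightarrow> real mat \<Rightarrow> real mat
   \<Rightarrow> (nat \<Rightarrow> real vec) \<Rightarrow> (nat \<Rightarrow> real vec)
   \<Rightarrow> (nat \<Rightarrow> real mat) \<Rightarrow> (nat \<Rightarrow> real mat) \<Rightarrow> (nat \<Rightarrow> real mat) \<Rightarrow> (nat \<Rightarrow> real mat)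
   \<Rightarrow> (nat \<Rightarrow> real mat) \<Rightarrow> (nat \<Rightarrow> real mat) \<Rightarrow> (nat \<Rightarrow> real mat)
   \<Rightarrow> (nat \<Rightarrow> real vec) \<Rightarrow> bool" where
  "alg1a N n m T B Z \<beta> Q S H a0 Pi0 x y UPi DPi UH DH UQ DQ
       ap af UPp DPp UPf DPf URe DRe Ku e \<longleftrightarrow>
     (let Tb = T - S * minv H * Z; Bb = B - S * minv H * \<beta>;
          Qb = Q - S * minv H * S\<^sup>T in
     is_UDU n Pi0 UPi DPi \<and> is_UDU m H UH DH \<and> is_UDU n Qb UQ DQ \<and>
     af 0 = a0 \<and> UPf 0 = UPi \<and> DPf 0 = DPi \<and>
     (\<forall>k. 1 \<le> k \<and> k \<le> N \<longrightarrow>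
        ap k = Tb *\<^sub>v af (k-1) + Bb *\<^sub>v x (k-1) + (S * minv H) *\<^sub>v y (k-1) \<and>
        MWGS (n + n) n (four_block_mat (Tb * UPf (k-1)) UQ
                                       (0\<^sub>m 0 n) (0\<^sub>m 0 n))\<^sup>T
             (DPf (k-1) \<oplus>\<^sub>m DQ) (UPp k) (DPp k) \<and>
        UPf k \<in> carrier_mat n n \<and> Ku k \<in> carrier_mat n m \<and>
        URe k \<in> carrier_mat m m \<and> DPf k \<in> carrier_mat n n \<and> DRe k \<in> carrier_mat m m \<and>
        MWGS (n + m) (n + m)
             (four_block_mat (UPp k) (0\<^sub>m n m) (Z * UPp k) UH)\<^sup>T
             (DPp k \<oplus>\<^sub>m DH)
             (four_block_mat (UPf k) (Ku k) (0\<^sub>m m n) (URe k))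
             (DPf k \<oplus>\<^sub>m DRe k) \<and>
        e k = y k - Z *\<^sub>v ap k - \<beta> *\<^sub>v x k \<and>
        af k = ap k + (Ku k * minv (URe k)) *\<^sub>v e k))"

end

theory Submission
  imports Defs "Jordan_Normal_Form.Determinant"
begin


lemma minv_props:
  assumes A: "A \<in> carrier_mat n n" and d: "det A \<noteq> 0"
  shows "minv A \<in> carrier_mat n n \<and> A * minv A = 1\<^sub>m n \<and> minv A * A = 1\<^sub>m n"
proof -
  from det_non_zero_imp_unit[OF A d, of "()"]
  obtain B where B: "B \<in> carrier_mat n n" "B * A = 1\<^sub>m n" "A * B = 1\<^sub>m n"
    unfolding Units_def ring_mat_def by auto
  have ex: "\<exists>B. B \<in> carrier_mat (dim_row A) (dim_row A) \<and>
                     A * B = 1\<^sub>m (dim_row A) \<and> B * A = 1\<^sub>m (dim_row A)"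
    using A B by auto
  show ?thesis using someI_ex[OF ex] A unfolding minv_def by auto
qed

lemma unit_upper_det: assumes "unit_upper n U" shows "det U \<noteq> 0"
proof -
  have U: "U \<in> carrier_mat n n" "upper_triangular U" "\<forall>i<n. U $$ (i,i) = 1"
    using assms unfolding unit_upper_def by auto
  have "Matrix.diag_mat U = replicate n 1"
    using U by (intro nth_equalityI, auto simp: Matrix.diag_mat_def)
  then show ?thesis using det_upper_triangular[OF U(2) U(1)] by simp
qed

lemma dsum_eq: "D1 \<in> carrier_mat n1 n1 \<Longrightarrow> D2 \<in> carrier_mat n2 n2 \<Longrightarrow>
  D1 \<oplus>\<^sub>m D2 = four_block_mat D1 (0\<^sub>m n1 n2) (0\<^sub>m n2 n1) D2"
  unfolding dsum_def by auto

lemma four_block_0dim: "M \<in> carrier_mat n n \<Longrightarrow> B \<in> carrier_mat n 0 \<Longrightarrow> C \<in> carrier_mat 0 n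
  \<Longrightarrow> D \<in> carrier_mat 0 0 \<Longrightarrow> four_block_mat M B C D = M"
  by (intro eq_matI) auto

lemma four_block_inj:
  assumes "A \<in> carrier_mat nr1 nc1" "B \<in> carrier_mat nr1 nc2" "C \<in> carrier_mat nr2 nc1" "D \<in> carrier_mat nr2 nc2"
   "A' \<in> carrier_mat nr1 nc1" "B' \<in> carrier_mat nr1 nc2" "C' \<in> carrier_mat nr2 nc1" "D' \<in> carrier_mat nr2 nc2"
   and eq: "four_block_mat A B C D = four_block_mat A' B' C' D'"
  shows "A = A' \<and> B = B' \<and> C = C' \<and> D = D'"
proof (intro conjI)
  let ?F = "four_block_mat A B C D" let ?G = "four_block_mat A' B' C' D'"
  have dims: "dim_row A = nr1" "dim_col A = nc1" "dim_row D = nr2" "dim_col D = nc2"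
     "dim_row A' = nr1" "dim_col A' = nc1" "dim_row D' = nr2" "dim_col D' = nc2"
     "dim_row B = nr1" "dim_col B = nc2" "dim_row C = nr2" "dim_col C = nc1"
     "dim_row B' = nr1" "dim_col B' = nc2" "dim_row C' = nr2" "dim_col C' = nc1" using assms by auto
  have e: "\<And>i j. i < nr1 + nr2 \<Longrightarrow> j < nc1 + nc2 \<Longrightarrow> ?F $$ (i,j) = ?G $$ (i,j)" using eq by simp
  show "A = A'"
  proof (rule eq_matI)
    fix i j assume "i < dim_row A'" "j < dim_col A'"
    then show "A $$ (i,j) = A' $$ (i,j)" using e[of i j] dims by auto
  qed (use assms in auto)
  show "B = B'"
  proof (rule eq_matI)
    fix i j assume "i < dim_row B'" "j < dim_col B'"
    then show "B $$ (i,j) = B' $$ (i,j)" using e[of i "j + nc1"] dims by auto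
  qed (use assms in auto)
  show "C = C'"
  proof (rule eq_matI)
    fix i j assume "i < dim_row C'" "j < dim_col C'"
    then show "C $$ (i,j) = C' $$ (i,j)" using e[of "i + nr1" j] dims by auto
  qed (use assms in auto)
  show "D = D'"
  proof (rule eq_matI)
    fix i j assume "i < dim_row D'" "j < dim_col D'"
    then show "D $$ (i,j) = D' $$ (i,j)" using e[of "i + nr1" "j + nc1"] dims by auto
  qed (use assms in auto)
qed

lemma MWGS_RDR:
  assumes "MWGS r s A DA R DR"
  shows "R * DR * R\<^sup>T = A\<^sup>T * DA * A"
proof -
  from assms obtain W where W: "W \<in> carrier_mat r s" and A: "A \<in> carrier_mat r s"
    and R: "R \<in> carrier_mat s s" and DA: "DA \<in> carrier_mat r r"
    and e1: "A\<^sup>T = R * W\<^sup>T" and e2: "W\<^sup>T * DA * W = DR"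
    unfolding MWGS_def unit_upper_def pos_diag_mat_def diag_mat_def by blast
  have "A = (R * W\<^sup>T)\<^sup>T" using e1 by (metis transpose_transpose)
  also have "\<dots> = W * R\<^sup>T" using transpose_mult[OF R, of "W\<^sup>T" r] W by simp
  finally have A2: "A = W * R\<^sup>T" .
  have "A\<^sup>T * DA * A = R * W\<^sup>T * DA * (W * R\<^sup>T)" using e1 A2 by simp
  also have "\<dots> = R * (W\<^sup>T * DA * W) * R\<^sup>T"
  proof -
    have c: "W\<^sup>T * DA \<in> carrier_mat s r" using W DA by auto
    have "R * W\<^sup>T * DA * (W * R\<^sup>T) = R * (W\<^sup>T * DA) * (W * R\<^sup>T)"
      using R W DA by (simp add: assoc_mult_mat[of R s s "W\<^sup>T" r DA r])
    also have "\<dots> = R * ((W\<^sup>T * DA) * (W * R\<^sup>T))" using R c W by (simp add: assoc_mult_mat[of R s s _ r _ s])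
    also have "(W\<^sup>T * DA) * (W * R\<^sup>T) = (W\<^sup>T * DA * W) * R\<^sup>T" using c W R
      by (simp add: assoc_mult_mat[of _ s r W s "R\<^sup>T" s])
    also have "R * ((W\<^sup>T * DA * W) * R\<^sup>T) = R * (W\<^sup>T * DA * W) * R\<^sup>T"
      using R c W by (simp add: assoc_mult_mat[of R s s "W\<^sup>T * DA * W" s "R\<^sup>T" s])
    finally show ?thesis .
  qed
  finally show ?thesis using e2 by simp
qed



lemma block1:
  fixes X Y D1 D2 :: "real mat"
  assumes c: "X \<in> carrier_mat n n" "Y \<in> carrier_mat n n" "D1 \<in> carrier_mat n n" "D2 \<in> carrier_mat n n"
  shows "((four_block_mat X Y (0\<^sub>m 0 n) (0\<^sub>m 0 n))\<^sup>T)\<^sup>T * (D1 \<oplus>\<^sub>m D2) * (four_block_mat X Y (0\<^sub>m 0 n) (0\<^sub>m 0 n))\<^sup>T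
     = X * D1 * X\<^sup>T + Y * D2 * Y\<^sup>T"
proof -
  have tr: "(four_block_mat X Y (0\<^sub>m 0 n) (0\<^sub>m 0 n))\<^sup>T = four_block_mat X\<^sup>T (0\<^sub>m n 0) Y\<^sup>T (0\<^sub>m n 0)"
    using transpose_four_block_mat[OF c(1) c(2) zero_carrier_mat zero_carrier_mat] by simp
  have m1: "four_block_mat X Y (0\<^sub>m 0 n) (0\<^sub>m 0 n) * (D1 \<oplus>\<^sub>m D2) =
     four_block_mat (X * D1 + Y * 0\<^sub>m n n) (X * 0\<^sub>m n n + Y * D2) (0\<^sub>m 0 n * D1 + 0\<^sub>m 0 n * 0\<^sub>m n n) (0\<^sub>m 0 n * 0\<^sub>m n n + 0\<^sub>m 0 n * D2)"
    unfolding dsum_eq[OF c(3,4)] by (rule mult_four_block_mat, use c in auto)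
  have m1': "four_block_mat X Y (0\<^sub>m 0 n) (0\<^sub>m 0 n) * (D1 \<oplus>\<^sub>m D2) =
     four_block_mat (X * D1) (Y * D2) (0\<^sub>m 0 n) (0\<^sub>m 0 n)"
    unfolding m1 using c by simp
  have "four_block_mat (X * D1) (Y * D2) (0\<^sub>m 0 n) (0\<^sub>m 0 n) * four_block_mat X\<^sup>T (0\<^sub>m n 0) Y\<^sup>T (0\<^sub>m n 0)
     = four_block_mat (X * D1 * X\<^sup>T + Y * D2 * Y\<^sup>T) (X * D1 * 0\<^sub>m n 0 + Y * D2 * 0\<^sub>m n 0)
        (0\<^sub>m 0 n * X\<^sup>T + 0\<^sub>m 0 n * Y\<^sup>T) (0\<^sub>m 0 n * 0\<^sub>m n 0 + 0\<^sub>m 0 n * 0\<^sub>m n 0)"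
    by (rule mult_four_block_mat, use c in auto)
  also have "\<dots> = X * D1 * X\<^sup>T + Y * D2 * Y\<^sup>T"
    by (rule four_block_0dim, use c in auto)
  finally have r: "four_block_mat (X * D1) (Y * D2) (0\<^sub>m 0 n) (0\<^sub>m 0 n) * four_block_mat X\<^sup>T (0\<^sub>m n 0) Y\<^sup>T (0\<^sub>m n 0) = X * D1 * X\<^sup>T + Y * D2 * Y\<^sup>T" .
  show ?thesis unfolding transpose_transpose m1' unfolding tr by (rule r)
qed

lemma block2:
  fixes U Z UH D DH :: "real mat"
  assumes c: "U \<in> carrier_mat n n" "Z \<in> carrier_mat m n" "UH \<in> carrier_mat m m" "D \<in> carrier_mat n n" "DH \<in> carrier_mat m m"
  shows "((four_block_mat U (0\<^sub>m n m) (Z * U) UH)\<^sup>T)\<^sup>T * (D \<oplus>\<^sub>m DH) * (four_block_mat U (0\<^sub>m n m) (Z * U) UH)\<^sup>T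
     = four_block_mat (U * D * U\<^sup>T) (U * D * U\<^sup>T * Z\<^sup>T) (Z * (U * D * U\<^sup>T)) (Z * (U * D * U\<^sup>T) * Z\<^sup>T + UH * DH * UH\<^sup>T)"
proof -
  have tr: "(four_block_mat U (0\<^sub>m n m) (Z * U) UH)\<^sup>T = four_block_mat U\<^sup>T (Z * U)\<^sup>T (0\<^sub>m m n) UH\<^sup>T"
    using transpose_four_block_mat[OF c(1) zero_carrier_mat mult_carrier_mat[OF c(2) c(1)] c(3)] by simp
  have m1: "four_block_mat U (0\<^sub>m n m) (Z * U) UH * (D \<oplus>\<^sub>m DH) =
     four_block_mat (U * D + 0\<^sub>m n m * 0\<^sub>m m n) (U * 0\<^sub>m n m + 0\<^sub>m n m * DH) (Z * U * D + UH * 0\<^sub>m m n) (Z * U * 0\<^sub>m n m + UH * DH)"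
    unfolding dsum_eq[OF c(4,5)] by (rule mult_four_block_mat, use c in auto)
  have m1': "four_block_mat U (0\<^sub>m n m) (Z * U) UH * (D \<oplus>\<^sub>m DH) =
     four_block_mat (U * D) (0\<^sub>m n m) (Z * U * D) (UH * DH)"
    unfolding m1 using c by simp
  have "four_block_mat (U * D) (0\<^sub>m n m) (Z * U * D) (UH * DH) * four_block_mat U\<^sup>T (Z * U)\<^sup>T (0\<^sub>m m n) UH\<^sup>T
     = four_block_mat (U * D * U\<^sup>T + 0\<^sub>m n m * 0\<^sub>m m n) (U * D * (Z * U)\<^sup>T + 0\<^sub>m n m * UH\<^sup>T)
        (Z * U * D * U\<^sup>T + UH * DH * 0\<^sub>m m n) (Z * U * D * (Z * U)\<^sup>T + UH * DH * UH\<^sup>T)"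
    by (rule mult_four_block_mat, use c in auto)
  also have "\<dots> = four_block_mat (U * D * U\<^sup>T) (U * D * U\<^sup>T * Z\<^sup>T) (Z * (U * D * U\<^sup>T)) (Z * (U * D * U\<^sup>T) * Z\<^sup>T + UH * DH * UH\<^sup>T)"
  proof (rule cong_four_block_mat)
    show "U * D * U\<^sup>T + 0\<^sub>m n m * 0\<^sub>m m n = U * D * U\<^sup>T" using c by simp
    have t: "(Z * U)\<^sup>T = U\<^sup>T * Z\<^sup>T" using transpose_mult[OF c(2,1)] .
    show "U * D * (Z * U)\<^sup>T + 0\<^sub>m n m * UH\<^sup>T = U * D * U\<^sup>T * Z\<^sup>T"
      unfolding t using c by (simp add: assoc_mult_mat[of _ n n _ n _ m])
    show "Z * U * D * U\<^sup>T + UH * DH * 0\<^sub>m m n = Z * (U * D * U\<^sup>T)"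
      using c by (simp add: assoc_mult_mat[of _ m n _ n _ n])
    have a1: "Z * U * D * U\<^sup>T = Z * (U * D * U\<^sup>T)"
      using c by (simp add: assoc_mult_mat[of _ m n _ n _ n])
    have a2: "Z * U * D * (U\<^sup>T * Z\<^sup>T) = Z * U * D * U\<^sup>T * Z\<^sup>T"
      by (rule assoc_mult_mat[symmetric, of _ m n _ n _ m]) (use c in auto)
    show "Z * U * D * (Z * U)\<^sup>T + UH * DH * UH\<^sup>T = Z * (U * D * U\<^sup>T) * Z\<^sup>T + UH * DH * UH\<^sup>T"
      unfolding t a2 a1 ..
  qed
  finally have r: "four_block_mat (U * D) (0\<^sub>m n m) (Z * U * D) (UH * DH) * four_block_mat U\<^sup>T (Z * U)\<^sup>T (0\<^sub>m m n) UH\<^sup>T = four_block_mat (U * D * U\<^sup>T) (U * D * U\<^sup>T * Z\<^sup>T) (Z * (U * D * U\<^sup>T)) (Z * (U * D * U\<^sup>T) * Z\<^sup>T + UH * DH * UH\<^sup>T)" .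
  show ?thesis unfolding transpose_transpose m1' unfolding tr by (rule r)
qed

lemma block3:
  fixes UPf Ku URe DPf DRe :: "real mat"
  assumes c: "UPf \<in> carrier_mat n n" "Ku \<in> carrier_mat n m" "URe \<in> carrier_mat m m" "DPf \<in> carrier_mat n n" "DRe \<in> carrier_mat m m"
  shows "four_block_mat UPf Ku (0\<^sub>m m n) URe * (DPf \<oplus>\<^sub>m DRe) * (four_block_mat UPf Ku (0\<^sub>m m n) URe)\<^sup>T
     = four_block_mat (UPf * DPf * UPf\<^sup>T + Ku * DRe * Ku\<^sup>T) (Ku * DRe * URe\<^sup>T) (URe * DRe * Ku\<^sup>T) (URe * DRe * URe\<^sup>T)"
proof -
  have tr: "(four_block_mat UPf Ku (0\<^sub>m m n) URe)\<^sup>T = four_block_mat UPf\<^sup>T (0\<^sub>m n m) Ku\<^sup>T URe\<^sup>T"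
    using transpose_four_block_mat[OF c(1) c(2) zero_carrier_mat c(3)] by simp
  have m1: "four_block_mat UPf Ku (0\<^sub>m m n) URe * (DPf \<oplus>\<^sub>m DRe) =
     four_block_mat (UPf * DPf + Ku * 0\<^sub>m m n) (UPf * 0\<^sub>m n m + Ku * DRe) (0\<^sub>m m n * DPf + URe * 0\<^sub>m m n) (0\<^sub>m m n * 0\<^sub>m n m + URe * DRe)"
    unfolding dsum_eq[OF c(4,5)] by (rule mult_four_block_mat, use c in auto)
  have m1': "four_block_mat UPf Ku (0\<^sub>m m n) URe * (DPf \<oplus>\<^sub>m DRe) =
     four_block_mat (UPf * DPf) (Ku * DRe) (0\<^sub>m m n) (URe * DRe)"
    unfolding m1 using c by simp
  have "four_block_mat (UPf * DPf) (Ku * DRe) (0\<^sub>m m n) (URe * DRe) * four_block_mat UPf\<^sup>T (0\<^sub>m n m) Ku\<^sup>T URe\<^sup>T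
     = four_block_mat (UPf * DPf * UPf\<^sup>T + Ku * DRe * Ku\<^sup>T) (UPf * DPf * 0\<^sub>m n m + Ku * DRe * URe\<^sup>T)
        (0\<^sub>m m n * UPf\<^sup>T + URe * DRe * Ku\<^sup>T) (0\<^sub>m m n * 0\<^sub>m n m + URe * DRe * URe\<^sup>T)"
    by (rule mult_four_block_mat, use c in auto)
  also have "\<dots> = four_block_mat (UPf * DPf * UPf\<^sup>T + Ku * DRe * Ku\<^sup>T) (Ku * DRe * URe\<^sup>T) (URe * DRe * Ku\<^sup>T) (URe * DRe * URe\<^sup>T)"
    using c by (intro cong_four_block_mat, simp_all)
  finally show ?thesis unfolding m1' tr .
qed



lemma qnn_diag:
  assumes D: "pos_diag_mat r D" and w: "w \<in> carrier_vec r"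
  shows "w \<bullet> (D *\<^sub>v w) \<ge> 0"
proof -
  have Dc: "D \<in> carrier_mat r r" and dg: "\<And>i j. i < r \<Longrightarrow> j < r \<Longrightarrow> i \<noteq> j \<Longrightarrow> D $$ (i,j) = 0"
    and pos: "\<And>i. i < r \<Longrightarrow> D $$ (i,i) > 0"
    using D unfolding pos_diag_mat_def diag_mat_def diagonal_mat_def by auto
  have e: "(D *\<^sub>v w) $ i = D $$ (i,i) * w $ i" if i: "i < r" for i
  proof -
    have "(D *\<^sub>v w) $ i = (\<Sum>j\<in>{0..<r}. D $$ (i,j) * w $ j)"
      using Dc w i by (simp add: scalar_prod_def)
    also have "\<dots> = D $$ (i,i) * w $ i"
      by (subst sum.remove[of _ i], use i dg in auto)
    finally show ?thesis .
  qed
  have "w \<bullet> (D *\<^sub>v w) = (\<Sum>i\<in>{0..<r}. w $ i * (D *\<^sub>v w) $ i)"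
    using Dc w by (simp add: scalar_prod_def)
  also have "\<dots> = (\<Sum>i\<in>{0..<r}. D $$ (i,i) * (w $ i * w $ i))"
    by (rule sum.cong, auto simp: e)
  also have "\<dots> \<ge> 0" using pos by (intro sum_nonneg) (simp add: less_imp_le)
  finally show ?thesis .
qed

definition qnn :: "nat \<Rightarrow> real mat \<Rightarrow> bool" where
  "qnn r M \<longleftrightarrow> (\<forall>w\<in>carrier_vec r. w \<bullet> (M *\<^sub>v w) \<ge> 0)"

lemma qnn_cong:
  assumes q: "qnn r M" and M: "M \<in> carrier_mat r r" and G: "G \<in> carrier_mat k r"
  shows "qnn k (G * M * G\<^sup>T)"
  unfolding qnn_def
proof
  fix v :: "real vec" assume v: "v \<in> carrier_vec k"
  let ?w = "G\<^sup>T *\<^sub>v v"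
  have w: "?w \<in> carrier_vec r" using G v by auto
  have "(G * M * G\<^sup>T) *\<^sub>v v = G *\<^sub>v (M *\<^sub>v ?w)"
    using G M v by (simp add: assoc_mult_mat_vec[of _ k r _ r] assoc_mult_mat_vec[of _ k r _ k])
  hence "v \<bullet> ((G * M * G\<^sup>T) *\<^sub>v v) = ?w \<bullet> (M *\<^sub>v ?w)"
    using transpose_vec_mult_scalar[OF G, of "M *\<^sub>v ?w" v] M w v by simp
  then show "v \<bullet> ((G * M * G\<^sup>T) *\<^sub>v v) \<ge> 0" using q w unfolding qnn_def by auto
qed

lemma sym_conj:
  fixes M G :: "real mat"
  assumes "M\<^sup>T = M" "M \<in> carrier_mat r r" "G \<in> carrier_mat k r"
  shows "(G * M * G\<^sup>T)\<^sup>T = G * M * G\<^sup>T"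
proof -
  have "(G * M * G\<^sup>T)\<^sup>T = (G\<^sup>T)\<^sup>T * (G * M)\<^sup>T"
    using assms by (intro transpose_mult[of _ k r]) auto
  also have "(G * M)\<^sup>T = M\<^sup>T * G\<^sup>T" using assms by (intro transpose_mult[of _ k r]) auto
  finally show ?thesis using assms
    by (simp add: assoc_mult_mat[of G k r M r "G\<^sup>T" k])
qed

lemma diag_transpose: "diag_mat n D \<Longrightarrow> D\<^sup>T = D"
  unfolding diag_mat_def diagonal_mat_def by (intro eq_matI) (auto, metis)

lemma pd_sym: "pd n H \<Longrightarrow> H\<^sup>T = H"
  unfolding pd_def sym_mat_def by auto

lemma Re_det:
  fixes Z Pp H :: "real mat"
  assumes Z: "Z \<in> carrier_mat m n" and Pp: "Pp \<in> carrier_mat n n" "qnn n Pp" and H: "pd m H"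
  shows "det (Z * Pp * Z\<^sup>T + H) \<noteq> 0"
proof
  have Hc: "H \<in> carrier_mat m m" using H unfolding pd_def by auto
  have q: "qnn m (Z * Pp * Z\<^sup>T)" by (rule qnn_cong[OF Pp(2) Pp(1) Z])
  assume "det (Z * Pp * Z\<^sup>T + H) = 0"
  then obtain v where v: "v \<in> carrier_vec m" "v \<noteq> 0\<^sub>v m" "(Z * Pp * Z\<^sup>T + H) *\<^sub>v v = 0\<^sub>v m"
    using det_0_iff_vec_prod_zero[of "Z * Pp * Z\<^sup>T + H" m] Z Pp Hc by auto
  have c1: "Z * Pp * Z\<^sup>T \<in> carrier_mat m m" using Z Pp by auto
  have "(Z * Pp * Z\<^sup>T + H) *\<^sub>v v = (Z * Pp * Z\<^sup>T) *\<^sub>v v + H *\<^sub>v v"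
    by (rule add_mult_distrib_mat_vec[OF c1 Hc v(1)])
  hence "v \<bullet> ((Z * Pp * Z\<^sup>T) *\<^sub>v v) + v \<bullet> (H *\<^sub>v v) = 0"
    using v c1 Hc by (metis scalar_prod_add_distrib scalar_prod_right_zero mult_mat_vec_carrier)
  moreover have "v \<bullet> ((Z * Pp * Z\<^sup>T) *\<^sub>v v) \<ge> 0" using q v unfolding qnn_def by auto
  moreover have "v \<bullet> (H *\<^sub>v v) > 0" using H v unfolding pd_def by auto
  ultimately show False by linarith
qed



lemma step:
  fixes Z H UH DH Tb Qb UQ DQ U0 D0 Pf0 UPp DPp Pp Re K Pf UPf Ku URe DPf DRe :: "real mat"
  assumes Z: "Z \<in> carrier_mat m n" and H: "pd m H" and UDH: "is_UDU m H UH DH"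
    and Tb: "Tb \<in> carrier_mat n n" and UDQ: "is_UDU n Qb UQ DQ"
    and U0: "U0 \<in> carrier_mat n n" and D0: "D0 \<in> carrier_mat n n" and Pf0: "Pf0 = U0 * D0 * U0\<^sup>T"
    and M1: "MWGS (n + n) n (four_block_mat (Tb * U0) UQ (0\<^sub>m 0 n) (0\<^sub>m 0 n))\<^sup>T (D0 \<oplus>\<^sub>m DQ) UPp DPp"
    and Pp: "Pp = Tb * Pf0 * Tb\<^sup>T + Qb" and Re: "Re = Z * Pp * Z\<^sup>T + H"
    and K: "K = Pp * Z\<^sup>T * minv Re" and Pf: "Pf = (1\<^sub>m n - K * Z) * Pp"
    and c: "UPf \<in> carrier_mat n n" "Ku \<in> carrier_mat n m" "URe \<in> carrier_mat m m"
      "DPf \<in> carrier_mat n n" "DRe \<in> carrier_mat m m"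
    and M2: "MWGS (n + m) (n + m) (four_block_mat UPp (0\<^sub>m n m) (Z * UPp) UH)\<^sup>T (DPp \<oplus>\<^sub>m DH)
             (four_block_mat UPf Ku (0\<^sub>m m n) URe) (DPf \<oplus>\<^sub>m DRe)"
  shows "UPp * DPp * UPp\<^sup>T = Pp \<and> URe * DRe * URe\<^sup>T = Re \<and> Ku * minv URe = K \<and> UPf * DPf * UPf\<^sup>T = Pf"
proof -
  have Hc: "H \<in> carrier_mat m m" using H unfolding pd_def by auto
  have UH: "UH \<in> carrier_mat m m" "DH \<in> carrier_mat m m" "H = UH * DH * UH\<^sup>T"
    using UDH unfolding is_UDU_def unit_upper_def diag_mat_def by auto
  have UQ: "UQ \<in> carrier_mat n n" "DQ \<in> carrier_mat n n" "Qb = UQ * DQ * UQ\<^sup>T"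
    using UDQ unfolding is_UDU_def unit_upper_def diag_mat_def by auto
  have UPp: "UPp \<in> carrier_mat n n" "DPp \<in> carrier_mat n n" "diag_mat n DPp"
    using M1 unfolding MWGS_def unit_upper_def diag_mat_def by auto
  have TU: "Tb * U0 \<in> carrier_mat n n" using Tb U0 by auto
  define A1 where "A1 = (four_block_mat (Tb * U0) UQ (0\<^sub>m 0 n) (0\<^sub>m 0 n))\<^sup>T"
  have A1c: "A1 \<in> carrier_mat (n + n) n" using M1 unfolding MWGS_def A1_def by auto
  have DA1: "pos_diag_mat (n + n) (D0 \<oplus>\<^sub>m DQ)" using M1 unfolding MWGS_def by auto
  have DA1c: "D0 \<oplus>\<^sub>m DQ \<in> carrier_mat (n + n) (n + n)" using DA1 unfolding pos_diag_mat_def diag_mat_def by auto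
  have e1: "UPp * DPp * UPp\<^sup>T = Tb * U0 * D0 * (Tb * U0)\<^sup>T + UQ * DQ * UQ\<^sup>T"
    using MWGS_RDR[OF M1] block1[OF TU UQ(1) D0 UQ(2)] by simp
  have "Tb * U0 * D0 * (Tb * U0)\<^sup>T = Tb * Pf0 * Tb\<^sup>T"
  proof -
    have t: "(Tb * U0)\<^sup>T = U0\<^sup>T * Tb\<^sup>T" using transpose_mult[OF Tb U0] .
    have "Tb * U0 * D0 * (U0\<^sup>T * Tb\<^sup>T) = Tb * U0 * D0 * U0\<^sup>T * Tb\<^sup>T"
      by (rule assoc_mult_mat[symmetric, of _ n n _ n _ n]) (use Tb U0 D0 in auto)
    also have "Tb * U0 * D0 * U0\<^sup>T = Tb * Pf0"
      unfolding Pf0 using Tb U0 D0 by (simp add: assoc_mult_mat[of _ n n _ n _ n])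
    finally show ?thesis unfolding t .
  qed
  hence P1: "UPp * DPp * UPp\<^sup>T = Pp" using e1 UQ Pp by simp
  have Ppc: "Pp \<in> carrier_mat n n" using P1[symmetric] UPp by auto
  have Ppsym: "Pp\<^sup>T = Pp" using P1 sym_conj[OF diag_transpose[OF UPp(3)] UPp(2) UPp(1)] by simp
  have "Pp = A1\<^sup>T * (D0 \<oplus>\<^sub>m DQ) * A1" using P1 MWGS_RDR[OF M1] unfolding A1_def by simp
  hence "Pp = A1\<^sup>T * (D0 \<oplus>\<^sub>m DQ) * (A1\<^sup>T)\<^sup>T" by simp
  moreover have "qnn (n + n) (D0 \<oplus>\<^sub>m DQ)" using qnn_diag[OF DA1] unfolding qnn_def by auto
  ultimately have Ppq: "qnn n Pp" using qnn_cong[OF _ DA1c, of "A1\<^sup>T" n] A1c by auto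
  have Rec: "Re \<in> carrier_mat m m" using Re Z Ppc Hc by auto
  have dRe: "det Re \<noteq> 0" unfolding Re by (rule Re_det[OF Z Ppc Ppq H])
  have Ri: "minv Re \<in> carrier_mat m m" "Re * minv Re = 1\<^sub>m m" "minv Re * Re = 1\<^sub>m m"
    using minv_props[OF Rec dRe] by auto
  have Resym: "Re\<^sup>T = Re"
  proof -
    have "(Z * Pp * Z\<^sup>T)\<^sup>T = Z * Pp * Z\<^sup>T" by (rule sym_conj[OF Ppsym Ppc Z])
    moreover have "(Z * Pp * Z\<^sup>T + H)\<^sup>T = (Z * Pp * Z\<^sup>T)\<^sup>T + H\<^sup>T"
      by (rule transpose_add) (use Z Ppc Hc in auto)
    ultimately show ?thesis unfolding Re using pd_sym[OF H] by simp
  qed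
  have "four_block_mat (UPf * DPf * UPf\<^sup>T + Ku * DRe * Ku\<^sup>T) (Ku * DRe * URe\<^sup>T) (URe * DRe * Ku\<^sup>T) (URe * DRe * URe\<^sup>T)
     = four_block_mat (UPp * DPp * UPp\<^sup>T) (UPp * DPp * UPp\<^sup>T * Z\<^sup>T) (Z * (UPp * DPp * UPp\<^sup>T)) (Z * (UPp * DPp * UPp\<^sup>T) * Z\<^sup>T + UH * DH * UH\<^sup>T)"
    using MWGS_RDR[OF M2] block2[OF UPp(1) Z UH(1) UPp(2) UH(2)] block3[OF c] by simp
  hence "four_block_mat (UPf * DPf * UPf\<^sup>T + Ku * DRe * Ku\<^sup>T) (Ku * DRe * URe\<^sup>T) (URe * DRe * Ku\<^sup>T) (URe * DRe * URe\<^sup>T)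
     = four_block_mat Pp (Pp * Z\<^sup>T) (Z * Pp) Re"
    unfolding P1 Re UH(3) .
  from four_block_inj[OF _ _ _ _ _ _ _ _ this, of n n m m] c Ppc Z Rec
  have b1: "UPf * DPf * UPf\<^sup>T + Ku * DRe * Ku\<^sup>T = Pp" and b2: "Ku * DRe * URe\<^sup>T = Pp * Z\<^sup>T"
    and b4: "URe * DRe * URe\<^sup>T = Re" by auto
  have dU: "det URe \<noteq> 0"
  proof
    assume "det URe = 0"
    have "det Re = det (URe * DRe) * det (URe\<^sup>T)"
      unfolding b4[symmetric] by (rule det_mult) (use c in auto)
    also have "\<dots> = det URe * det DRe * det (URe\<^sup>T)" using det_mult[OF c(3) c(5)] by simp
    finally show False using dRe \<open>det URe = 0\<close> by simp
  qed
  define Ui where "Ui = minv URe"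
  have Ui: "Ui \<in> carrier_mat m m" "URe * Ui = 1\<^sub>m m" "Ui * URe = 1\<^sub>m m"
    using minv_props[OF c(3) dU] unfolding Ui_def by auto
  define Ri where "Ri = minv Re"
  have Ri': "Ri \<in> carrier_mat m m" "Re * Ri = 1\<^sub>m m" "Ri * Re = 1\<^sub>m m" using Ri unfolding Ri_def by auto
  have KuUi: "Ku * Ui \<in> carrier_mat n m" using c Ui by auto
  have a: "Ku * Ui * Re = Ku * DRe * URe\<^sup>T"
  proof -
    have "Ku * Ui * Re = Ku * Ui * (URe * (DRe * URe\<^sup>T))"
      unfolding b4[symmetric] using c by (simp add: assoc_mult_mat[of URe m m DRe m "URe\<^sup>T" m])
    also have "\<dots> = Ku * Ui * URe * (DRe * URe\<^sup>T)"
      by (rule assoc_mult_mat[symmetric, of _ n m _ m _ m]) (use c Ui in auto)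
    also have "Ku * Ui * URe = Ku" using c Ui by (simp add: assoc_mult_mat[of Ku n m Ui m URe m])
    also have "Ku * (DRe * URe\<^sup>T) = Ku * DRe * URe\<^sup>T"
      by (rule assoc_mult_mat[symmetric, of _ n m _ m _ m]) (use c in auto)
    finally show ?thesis .
  qed
  have KK: "Ku * Ui = K"
  proof -
    have "K = Ku * DRe * URe\<^sup>T * Ri" unfolding K b2 Ri_def ..
    also have "\<dots> = Ku * Ui * Re * Ri" unfolding a ..
    also have "\<dots> = Ku * Ui * (Re * Ri)" by (rule assoc_mult_mat[of _ n m _ m _ m]) (use KuUi Rec Ri' in auto)
    finally show ?thesis using Ri' KuUi by (simp add: right_mult_one_mat)
  qed
  have Kc: "K \<in> carrier_mat n m" using KK KuUi by simp
  have Ku_eq: "K * URe = Ku" unfolding KK[symmetric] using c Ui by (simp add: assoc_mult_mat[of Ku n m Ui m URe m])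
  have KRe: "K * Re = Pp * Z\<^sup>T" using a b2 KK by simp
  have ReKt: "Re * K\<^sup>T = Z * Pp"
  proof -
    have "(K * Re)\<^sup>T = Re\<^sup>T * K\<^sup>T" by (rule transpose_mult[OF Kc Rec])
    moreover have "(Pp * Z\<^sup>T)\<^sup>T = Z * Pp\<^sup>T" using transpose_mult[OF Ppc, of "Z\<^sup>T" m] Z by simp
    ultimately show ?thesis using KRe Resym Ppsym by simp
  qed
  have KuD: "Ku * DRe * Ku\<^sup>T = K * Z * Pp"
  proof -
    have t: "Ku\<^sup>T = URe\<^sup>T * K\<^sup>T" unfolding Ku_eq[symmetric] by (rule transpose_mult[OF Kc c(3)])
    have "Ku * DRe * Ku\<^sup>T = K * URe * DRe * (URe\<^sup>T * K\<^sup>T)" unfolding t Ku_eq ..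
    also have "\<dots> = K * URe * DRe * URe\<^sup>T * K\<^sup>T"
      by (rule assoc_mult_mat[symmetric, of _ n m _ m _ n]) (use Kc c in auto)
    also have "K * URe * DRe * URe\<^sup>T = K * Re"
      unfolding b4[symmetric] using Kc c by (simp add: assoc_mult_mat[of _ n m _ m _ m])
    also have "K * Re * K\<^sup>T = K * (Re * K\<^sup>T)" by (rule assoc_mult_mat[of _ n m _ m _ n]) (use Kc Rec in auto)
    also have "\<dots> = K * Z * Pp" unfolding ReKt using Kc Z Ppc by (simp add: assoc_mult_mat[of _ n m _ n _ n])
    finally show ?thesis .
  qed
  have Pfe: "UPf * DPf * UPf\<^sup>T = Pf"
  proof -
    have "Pf = Pp - K * Z * Pp"
      unfolding Pf using Kc Z Ppc by (simp add: minus_mult_distrib_mat[of _ n n] assoc_mult_mat[of _ n m _ n _ n])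
    also have "\<dots> = UPf * DPf * UPf\<^sup>T"
    proof (rule eq_matI)
      fix i j assume ij: "i < dim_row (UPf * DPf * UPf\<^sup>T)" "j < dim_col (UPf * DPf * UPf\<^sup>T)"
      have "(UPf * DPf * UPf\<^sup>T + Ku * DRe * Ku\<^sup>T) $$ (i,j) = Pp $$ (i,j)" using b1 by simp
      then show "(Pp - K * Z * Pp) $$ (i,j) = (UPf * DPf * UPf\<^sup>T) $$ (i,j)"
        using ij c KuD[symmetric] Ppc Kc Z by auto
    qed (use c Ppc Kc Z in auto)
    finally show ?thesis ..
  qed
  show ?thesis using P1 b4 KK Pfe unfolding Ui_def by simp
qed



theorem proposition1:
  fixes N n m d :: nat
    and T B Z \<beta> Q S H Pi0 :: "real mat" and a0 :: "real vec"
    and x y :: "nat \<Rightarrow> real vec"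
    and ap1 af1 :: "nat \<Rightarrow> real vec" and Pp Pf Rek K :: "nat \<Rightarrow> real mat" and e1 :: "nat \<Rightarrow> real vec"
    and UPi DPi UH DH UQ DQ :: "real mat"
    and ap af :: "nat \<Rightarrow> real vec"
    and UPp DPp UPf DPf URe DRe Ku :: "nat \<Rightarrow> real mat" and e :: "nat \<Rightarrow> real vec"
  assumes model: "model_ok n m d T B Z \<beta> Q S H a0 Pi0"
    and inputs: "\<And>k. x k \<in> carrier_vec d" "\<And>k. y k \<in> carrier_vec m"
    and A1: "alg1 N n T B Z \<beta> Q S H a0 Pi0 x y ap1 af1 Pp Pf Rek K e1"
    and A1a: "alg1a N n m T B Z \<beta> Q S H a0 Pi0 x y UPi DPi UH DH UQ DQ
                 ap af UPp DPp UPf DPf URe DRe Ku e"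
  shows "\<forall>k. 1 \<le> k \<and> k \<le> N \<longrightarrow>
           UPp k * DPp k * (UPp k)\<^sup>T = Pp k \<and>
           URe k * DRe k * (URe k)\<^sup>T = Rek k \<and>
           Ku k * minv (URe k) = K k \<and>
           UPf k * DPf k * (UPf k)\<^sup>T = Pf k \<and>
           ap k = ap1 k \<and> af k = af1 k"
proof -
  define Tb where "Tb = T - S * minv H * Z"
  define Qb where "Qb = Q - S * minv H * S\<^sup>T"
  define Bb where "Bb = B - S * minv H * \<beta>"
  have Z: "Z \<in> carrier_mat m n" and Sc: "S \<in> carrier_mat n m" and H: "pd m H" and Pi0: "pd n Pi0"
    using model unfolding model_ok_def by blast+
  have dd: "dim_row (S * minv H * Z) = n" "dim_col (S * minv H * Z) = n" using Z Sc by auto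
  have Tb: "Tb \<in> carrier_mat n n" unfolding Tb_def minus_mat_def using dd by (intro carrier_matI) simp_all
  have a1all: "af1 0 = a0 \<and> Pf 0 = Pi0 \<and> (\<forall>k. 1 \<le> k \<and> k \<le> N \<longrightarrow>
        ap1 k = Tb *\<^sub>v af1 (k-1) + Bb *\<^sub>v x (k-1) + (S * minv H) *\<^sub>v y (k-1) \<and>
        Pp k = Tb * Pf (k-1) * Tb\<^sup>T + Qb \<and>
        Rek k = Z * Pp k * Z\<^sup>T + H \<and>
        K k = Pp k * Z\<^sup>T * minv (Rek k) \<and>
        e1 k = y k - Z *\<^sub>v ap1 k - \<beta> *\<^sub>v x k \<and>
        af1 k = ap1 k + K k *\<^sub>v e1 k \<and>
        Pf k = (1\<^sub>m n - K k * Z) * Pp k)"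
    using A1 unfolding alg1_def Let_def Tb_def Qb_def Bb_def .
  have b0all: "is_UDU n Pi0 UPi DPi \<and> is_UDU m H UH DH \<and> is_UDU n Qb UQ DQ \<and>
     af 0 = a0 \<and> UPf 0 = UPi \<and> DPf 0 = DPi \<and>
     (\<forall>k. 1 \<le> k \<and> k \<le> N \<longrightarrow>
        ap k = Tb *\<^sub>v af (k-1) + Bb *\<^sub>v x (k-1) + (S * minv H) *\<^sub>v y (k-1) \<and>
        MWGS (n + n) n (four_block_mat (Tb * UPf (k-1)) UQ
                                       (0\<^sub>m 0 n) (0\<^sub>m 0 n))\<^sup>T
             (DPf (k-1) \<oplus>\<^sub>m DQ) (UPp k) (DPp k) \<and>
        UPf k \<in> carrier_mat n n \<and> Ku k \<in> carrier_mat n m \<and>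
        URe k \<in> carrier_mat m m \<and> DPf k \<in> carrier_mat n n \<and> DRe k \<in> carrier_mat m m \<and>
        MWGS (n + m) (n + m)
             (four_block_mat (UPp k) (0\<^sub>m n m) (Z * UPp k) UH)\<^sup>T
             (DPp k \<oplus>\<^sub>m DH)
             (four_block_mat (UPf k) (Ku k) (0\<^sub>m m n) (URe k))
             (DPf k \<oplus>\<^sub>m DRe k) \<and>
        e k = y k - Z *\<^sub>v ap k - \<beta> *\<^sub>v x k \<and>
        af k = ap k + (Ku k * minv (URe k)) *\<^sub>v e k)"
    using A1a unfolding alg1a_def Let_def Tb_def Qb_def Bb_def .
  have a1: "af1 0 = a0" "Pf 0 = Pi0" using a1all by blast+
  have b0: "is_UDU n Pi0 UPi DPi" "is_UDU m H UH DH" "is_UDU n Qb UQ DQ"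
     "af 0 = a0" "UPf 0 = UPi" "DPf 0 = DPi" using b0all by blast+
  define Inv where "Inv k \<longleftrightarrow> UPf k \<in> carrier_mat n n \<and> DPf k \<in> carrier_mat n n \<and>
      UPf k * DPf k * (UPf k)\<^sup>T = Pf k \<and> af k = af1 k" for k
  have stp: "(UPp k * DPp k * (UPp k)\<^sup>T = Pp k \<and>
           URe k * DRe k * (URe k)\<^sup>T = Rek k \<and>
           Ku k * minv (URe k) = K k \<and>
           UPf k * DPf k * (UPf k)\<^sup>T = Pf k \<and>
           ap k = ap1 k \<and> af k = af1 k) \<and> Inv k"
    if k: "1 \<le> k" "k \<le> N" and I: "Inv (k - 1)" for k
  proof -
    note A = a1all[THEN conjunct2, THEN conjunct2, rule_format, OF conjI[OF k(1) k(2)]]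
    note Bk = b0all[THEN conjunct2, THEN conjunct2, THEN conjunct2, THEN conjunct2, THEN conjunct2, THEN conjunct2, rule_format, OF conjI[OF k(1) k(2)]]
    have I0: "UPf (k-1) \<in> carrier_mat n n \<and> DPf (k-1) \<in> carrier_mat n n \<and>
      UPf (k-1) * DPf (k-1) * (UPf (k-1))\<^sup>T = Pf (k-1) \<and> af (k-1) = af1 (k-1)"
      using I unfolding Inv_def .
    note I1 = I0[THEN conjunct1] and I2 = I0[THEN conjunct2, THEN conjunct1]
      and I3 = I0[THEN conjunct2, THEN conjunct2, THEN conjunct1, symmetric]
      and I4 = I0[THEN conjunct2, THEN conjunct2, THEN conjunct2]
    note A1 = A[THEN conjunct1] and A2 = A[THEN conjunct2, THEN conjunct1] and A3 = A[THEN conjunct2, THEN conjunct2, THEN conjunct1] and A4 = A[THEN conjunct2, THEN conjunct2, THEN conjunct2, THEN conjunct1] and A5 = A[THEN conjunct2, THEN conjunct2, THEN conjunct2, THEN conjunct2, THEN conjunct1] and A6 = A[THEN conjunct2, THEN conjunct2, THEN conjunct2, THEN conjunct2, THEN conjunct2, THEN conjunct1] and A7 = A[THEN conjunct2, THEN conjunct2, THEN conjunct2, THEN conjunct2, THEN conjunct2, THEN conjunct2]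
    note Bk1 = Bk[THEN conjunct1] and Bk2 = Bk[THEN conjunct2, THEN conjunct1] and Bk3 = Bk[THEN conjunct2, THEN conjunct2, THEN conjunct1] and Bk4 = Bk[THEN conjunct2, THEN conjunct2, THEN conjunct2, THEN conjunct1] and Bk5 = Bk[THEN conjunct2, THEN conjunct2, THEN conjunct2, THEN conjunct2, THEN conjunct1] and Bk6 = Bk[THEN conjunct2, THEN conjunct2, THEN conjunct2, THEN conjunct2, THEN conjunct2, THEN conjunct1] and Bk7 = Bk[THEN conjunct2, THEN conjunct2, THEN conjunct2, THEN conjunct2, THEN conjunct2, THEN conjunct2, THEN conjunct1] and Bk8 = Bk[THEN conjunct2, THEN conjunct2, THEN conjunct2, THEN conjunct2, THEN conjunct2, THEN conjunct2, THEN conjunct2, THEN conjunct1] and Bk9 = Bk[THEN conjunct2, THEN conjunct2, THEN conjunct2, THEN conjunct2, THEN conjunct2, THEN conjunct2, THEN conjunct2, THEN conjunct2, THEN conjunct1] and Bk10 = Bk[THEN conjunct2, THEN conjunct2, THEN conjunct2, THEN conjunct2, THEN conjunct2, THEN conjunct2, THEN conjunct2, THEN conjunct2, THEN conjunct2]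
    have r: "UPp k * DPp k * (UPp k)\<^sup>T = Pp k \<and> URe k * DRe k * (URe k)\<^sup>T = Rek k \<and>
       Ku k * minv (URe k) = K k \<and> UPf k * DPf k * (UPf k)\<^sup>T = Pf k"
      by (rule step[OF Z H b0(2) Tb b0(3) I1 I2 I3 Bk2 A2 A3 A4 A7 Bk3 Bk4 Bk5 Bk6 Bk7 Bk8])
    have ape: "ap k = ap1 k" unfolding Bk1 A1 I4 ..
    have ee: "e k = e1 k" unfolding Bk9 A5 ape ..
    have afe: "af k = af1 k" unfolding Bk10 A6 ape ee r[THEN conjunct2, THEN conjunct2, THEN conjunct1] ..
    note Bc1 = Bk[THEN conjunct2, THEN conjunct2, THEN conjunct1]
    note Bc2 = Bk[THEN conjunct2, THEN conjunct2, THEN conjunct2, THEN conjunct2, THEN conjunct2, THEN conjunct1]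
    note r1 = r[THEN conjunct1] and r2 = r[THEN conjunct2, THEN conjunct1]
      and r3 = r[THEN conjunct2, THEN conjunct2, THEN conjunct1] and r4 = r[THEN conjunct2, THEN conjunct2, THEN conjunct2]
    show ?thesis unfolding Inv_def by (intro conjI r1 r2 r3 r4 ape afe Bc1 Bc2)
  qed
  have inv: "k \<le> N \<Longrightarrow> Inv k" for k
  proof (induction k)
    case 0
    have "UPi \<in> carrier_mat n n" "DPi \<in> carrier_mat n n" "UPi * DPi * UPi\<^sup>T = Pi0"
      using b0(1) unfolding is_UDU_def unit_upper_def diag_mat_def by simp_all
    then show ?case unfolding Inv_def b0(4) b0(5) b0(6) a1 by (intro conjI) simp_all
  next
    case (Suc k)
    have i: "Inv (Suc k - 1)" using Suc.IH Suc.prems by simp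
    have o: "1 \<le> Suc k" by simp
    from stp[OF o Suc.prems i] show ?case by (rule conjunct2)
  qed
  show ?thesis
  proof (intro allI impI)
    fix k assume k: "1 \<le> k \<and> k \<le> N"
    have "Inv (k - 1)" using inv[of "k - 1"] k by linarith
    from stp[OF conjunct1[OF k] conjunct2[OF k] this, THEN conjunct1] show "UPp k * DPp k * (UPp k)\<^sup>T = Pp k \<and>
           URe k * DRe k * (URe k)\<^sup>T = Rek k \<and>
           Ku k * minv (URe k) = K k \<and>
           UPf k * DPf k * (UPf k)\<^sup>T = Pf k \<and>
           ap k = ap1 k \<and> af k = af1 k" .
  qed
qed

end
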